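(* Suppose the $L$-smoothness assumption holds and let $\{w_t\}$, $\{z_t\}$, $\{v_t\}$, $\{\hat D_t\}$ be generated by {\tt Scaled L-SVRG} with any step-size $\eta>0$. Then for every $t\ge0$, $$\mathbb{E}\left[\|v_t\|^2_{\hat D_t^{-1}}\right]\le3\,\mathbb{E}\left[\|\nabla P(w_t)\|^2_{\hat D_t^{-1}}\right]+\frac{6L^2}{\alpha}\mathbb{E}\left[\|w_t-z_t\|^2\right].$$
   Context: $P=\frac1n\sum_{i=1}^nf_i$ with $f_i:\mathbb{R}^d\to\mathbb{R}$. $L$-smoothness assumption: each $f_i$ and $P$ are twice differentiable with $L$-Lipschitz gradients. $\|x\|_D^2=x^TDx$. For $J\subseteq[n]$, $\nabla^2P_J(w)=\frac1{|J|}\sum_{j\in J}\nabla^2 f_j(w)$; $\odot$ is the Hadamard product; $\mathrm{diag}(x)$ is the diagonal matrix with the entries of $x$. Preconditioner (parameters $\alpha>0$, $\beta\in(0,1)$, $m\ge1$): $D_0=\frac1m\sum_{j=1}^m\mathrm{diag}(z'_j\odot\nabla^2P_{\mathcal{J}_j}(w_0)z'_j)$, $D_t=\beta D_{t-1}+(1-\beta)\mathrm{diag}(z'_t\odot\nabla^2P_{\mathcal{J}_t}(w_t)z'_t)$ for $t\ge1$, with independent Rademacher vectors $z'$ and random index sets $\mathcal{J}\subseteq[n]$, independent of the gradient samples; $\hat D_t$ diagonal with $(\hat D_t)_{ii}=\max\{\alpha,|(D_t)_{ii}|\}$. {\tt Scaled L-SVRG} (probability $p\in(0,1]$): $z_0=w_0$,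 $v_0=\nabla P(w_0)$; for $t\ge0$: $w_{t+1}=w_t-\eta\hat D_t^{-1}v_t$; $z_{t+1}=w_t$ with probability $p$ and $z_{t+1}=z_t$ with probability $1-p$; draw $i_{t+1}$ uniformly from $[n]$ independently; $v_{t+1}=\nabla f_{i_{t+1}}(w_{t+1})-\nabla f_{i_{t+1}}(z_{t+1})+\nabla P(z_{t+1})$; update $\hat D_{t+1}$. *)

theory Defs
  imports "HOL-Probability.Probability"
begin

definition diag_mat :: "real^'d \<Rightarrow> real^'d^'d" where
  "diag_mat x = (\<chi> i j. if i = j then x $ i else 0)"

definition hadamard :: "real^'d \<Rightarrow> real^'d \<Rightarrow> real^'d" where
  "hadamard x y = (\<chi> i. x $ i * y $ i)"

definition wnorm2 :: "real^'d^'d \<Rightarrow> real^'d \<Rightarrow> real" where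
  "wnorm2 D x = x \<bullet> (D *v x)"

definition hessJ :: "(nat \<Rightarrow> real^'d \<Rightarrow> real^'d^'d) \<Rightarrow> nat set \<Rightarrow> real^'d \<Rightarrow> real^'d^'d" where
  "hessJ H J w = (1 / real (card J)) *\<^sub>R (\<Sum>j\<in>J. H j w)"

definition rad_vecs :: "(real^'d) set" where
  "rad_vecs = {s. \<forall>i. s $ i = 1 \<or> s $ i = -1}"

text \<open>Encoding of all the primitive random sources of the algorithm into one family,
  so that their joint (mutual) independence can be stated with indep_vars.\<close>
datatype src = SCoin nat | SIdx nat | SRad nat | SRad0 nat | SJ nat | SJ0 nat

datatype 'd rval = VB bool | VN nat | VV "real^'d" | VS "nat set"

fun src_var ::
  "(nat \<Rightarrow> 'w \<Rightarrow> bool) \<Rightarrow> (nat \<Rightarrow> 'w \<Rightarrow> nat) \<Rightarrow> (nat \<Rightarrow> 'w \<Rightarrow> real^'d) \<Rightarrow>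
   (nat \<Rightarrow> 'w \<Rightarrow> real^'d) \<Rightarrow> (nat \<Rightarrow> 'w \<Rightarrow> nat set) \<Rightarrow> (nat \<Rightarrow> 'w \<Rightarrow> nat set) \<Rightarrow>
   src \<Rightarrow> 'w \<Rightarrow> 'd rval" where
  "src_var coin idx rz rz0 J J0 (SCoin t) = (\<lambda>\<omega>. VB (coin t \<omega>))"
| "src_var coin idx rz rz0 J J0 (SIdx t) = (\<lambda>\<omega>. VN (idx t \<omega>))"
| "src_var coin idx rz rz0 J J0 (SRad t) = (\<lambda>\<omega>. VV (rz t \<omega>))"
| "src_var coin idx rz rz0 J J0 (SRad0 j) = (\<lambda>\<omega>. VV (rz0 j \<omega>))"
| "src_var coin idx rz rz0 J J0 (SJ t) = (\<lambda>\<omega>. VS (J t \<omega>))"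
| "src_var coin idx rz rz0 J J0 (SJ0 j) = (\<lambda>\<omega>. VS (J0 j \<omega>))"

end

theory Submission
  imports Defs
begin



lemma diag_inv:
  fixes e :: "real^'d"
  assumes "\<And>i. e $ i \<noteq> 0"
  shows "matrix_inv (diag_mat e) = diag_mat (\<chi> i. 1 / e $ i)"
proof -
  let ?A = "diag_mat e" and ?B = "diag_mat (\<chi> i. 1 / e $ i)"
  have AB: "?A ** ?B = mat 1" "?B ** ?A = mat 1"
    using assms by (auto simp: diag_mat_def matrix_matrix_mult_def mat_def vec_eq_iff
        if_distrib[where f="\<lambda>x. x * _"] if_distrib[where f="\<lambda>x. _ * x"] cong: if_cong)
  have "\<exists>A'. ?A ** A' = mat 1 \<and> A' ** ?A = mat 1" using AB by blast
  then have S: "?A ** matrix_inv ?A = mat 1 \<and> matrix_inv ?A ** ?A = mat 1"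
    unfolding matrix_inv_def by (rule someI_ex)
  have "matrix_inv ?A = matrix_inv ?A ** (?A ** ?B)" using AB by simp
  also have "\<dots> = (matrix_inv ?A ** ?A) ** ?B" by (simp add: matrix_mul_assoc)
  also have "\<dots> = ?B" using S by simp
  finally show ?thesis .
qed

lemma wnorm2_diag:
  fixes e x :: "real^'d"
  shows "wnorm2 (diag_mat e) x = (\<Sum>i\<in>UNIV. e $ i * (x $ i)\<^sup>2)"
  unfolding wnorm2_def diag_mat_def inner_vec_def matrix_vector_mult_def
  by (auto simp: if_distrib[where f="\<lambda>x. x * _"] power2_eq_square cong: if_cong intro!: sum.cong)



lemma Q3:
  fixes e a b c :: "real^'d"
  assumes "\<And>i. e $ i > 0"
  shows "(\<Sum>i\<in>UNIV. (1 / e $ i) * ((a + b + c) $ i)\<^sup>2)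
     \<le> 3 * (\<Sum>i\<in>UNIV. (1 / e $ i) * (a $ i)\<^sup>2) + 3 * (\<Sum>i\<in>UNIV. (1 / e $ i) * (b $ i)\<^sup>2)
       + 3 * (\<Sum>i\<in>UNIV. (1 / e $ i) * (c $ i)\<^sup>2)"
proof -
  have "(1 / e $ i) * ((a + b + c) $ i)\<^sup>2 \<le> 3 * ((1 / e $ i) * (a $ i)\<^sup>2) + 3 * ((1 / e $ i) * (b $ i)\<^sup>2)
       + 3 * ((1 / e $ i) * (c $ i)\<^sup>2)" for i
  proof -
    have p: "1 / e $ i \<ge> 0" using assms[of i] by simp
    have "((a + b + c) $ i)\<^sup>2 \<le> 3 * (a $ i)\<^sup>2 + 3 * (b $ i)\<^sup>2 + 3 * (c $ i)\<^sup>2"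
    proof -
      have h: "0 \<le> (a$i - b$i)\<^sup>2 + (b$i - c$i)\<^sup>2 + (a$i - c$i)\<^sup>2" by simp
      show ?thesis using h by (simp add: power2_eq_square algebra_simps)
    qed
    from mult_left_mono[OF this p] show ?thesis by (simp add: algebra_simps)
  qed
  then have "(\<Sum>i\<in>UNIV. (1 / e $ i) * ((a + b + c) $ i)\<^sup>2) \<le> (\<Sum>i\<in>UNIV. 3 * ((1 / e $ i) * (a $ i)\<^sup>2) + 3 * ((1 / e $ i) * (b $ i)\<^sup>2)
       + 3 * ((1 / e $ i) * (c $ i)\<^sup>2))" by (rule sum_mono)
  then show ?thesis by (simp add: sum.distrib sum_distrib_left)
qed

lemma Qnorm:
  fixes e x :: "real^'d"
  assumes "\<alpha> > 0" "\<And>i. e $ i \<ge> \<alpha>"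
  shows "(\<Sum>i\<in>UNIV. (1 / e $ i) * (x $ i)\<^sup>2) \<le> (norm x)\<^sup>2 / \<alpha>"
proof -
  have "(1 / e $ i) * (x $ i)\<^sup>2 \<le> (1 / \<alpha>) * (x $ i)\<^sup>2" for i
    using assms[of] assms(2)[of i] by (intro mult_right_mono) (auto simp: frac_le)
  then have "(\<Sum>i\<in>UNIV. (1 / e $ i) * (x $ i)\<^sup>2) \<le> (\<Sum>i\<in>UNIV. (1 / \<alpha>) * (x $ i)\<^sup>2)"
    by (rule sum_mono)
  also have "\<dots> = (1 / \<alpha>) * (\<Sum>i\<in>UNIV. (x $ i)\<^sup>2)"
    by (simp add: sum_distrib_left)
  also have "(\<Sum>i\<in>UNIV. (x $ i)\<^sup>2) = (norm x)\<^sup>2"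
    unfolding power2_norm_eq_inner inner_vec_def by (simp add: power2_eq_square)
  also have "(1 / \<alpha>) * (norm x)\<^sup>2 = (norm x)\<^sup>2 / \<alpha>" by simp
  finally show ?thesis .
qed


lemma vec_nth_meas:
  fixes f :: "'a \<Rightarrow> 'b::real_normed_vector^'n"
  shows "f \<in> borel_measurable M \<Longrightarrow> (\<lambda>x. f x $ i) \<in> borel_measurable M"
  by (rule measurable_compose[OF _ borel_measurable_continuous_onI]) (auto intro!: continuous_intros)

theorem lemma6:
  fixes M :: "'w measure"
    and n m :: nat
    and f :: "nat \<Rightarrow> real^'d \<Rightarrow> real"
    and gf :: "nat \<Rightarrow> real^'d \<Rightarrow> real^'d"
    and H :: "nat \<Rightarrow> real^'d \<Rightarrow> real^'d^'d"
    and P :: "real^'d \<Rightarrow> real"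
    and gP :: "real^'d \<Rightarrow> real^'d"
    and HP :: "real^'d \<Rightarrow> real^'d^'d"
    and L \<alpha> \<beta> p \<eta> :: real
    and w0 :: "real^'d"
    and coin :: "nat \<Rightarrow> 'w \<Rightarrow> bool"
    and idx :: "nat \<Rightarrow> 'w \<Rightarrow> nat"
    and rz rz0 :: "nat \<Rightarrow> 'w \<Rightarrow> real^'d"
    and J J0 :: "nat \<Rightarrow> 'w \<Rightarrow> nat set"
    and w z v :: "nat \<Rightarrow> 'w \<Rightarrow> real^'d"
    and D Dh :: "nat \<Rightarrow> 'w \<Rightarrow> real^'d^'d"
    and t :: nat
  assumes prob: "prob_space M"
    (* problem and L-smoothness *)
    and n_pos: "n \<ge> 1"
    and P_def: "\<And>x. P x = (1 / real n) * (\<Sum>i<n. f i x)"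
    and f_grad: "\<And>i x. i < n \<Longrightarrow> (f i has_derivative (\<lambda>h. gf i x \<bullet> h)) (at x)"
    and f_hess: "\<And>i x. i < n \<Longrightarrow> (gf i has_derivative (\<lambda>h. H i x *v h)) (at x)"
    and f_lip: "\<And>i x y. i < n \<Longrightarrow> norm (gf i x - gf i y) \<le> L * norm (x - y)"
    and P_grad: "\<And>x. (P has_derivative (\<lambda>h. gP x \<bullet> h)) (at x)"
    and P_hess: "\<And>x. (gP has_derivative (\<lambda>h. HP x *v h)) (at x)"
    and P_lip: "\<And>x y. norm (gP x - gP y) \<le> L * norm (x - y)"
    (* parameters *)
    and alpha_pos: "\<alpha> > 0"
    and beta: "0 < \<beta>" "\<beta> < 1"
    and m_pos: "m \<ge> 1"
    and p_range: "0 < p" "p \<le> 1"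
    and eta_pos: "\<eta> > 0"
    (* randomness: mutually independent primitive random sources *)
    and indep: "prob_space.indep_vars M (\<lambda>_. count_space UNIV)
                  (src_var coin idx rz rz0 J J0) UNIV"
    and coin_dist: "\<And>s. s \<ge> 1 \<Longrightarrow> measure M {\<omega> \<in> space M. coin s \<omega>} = p"
    and idx_range: "\<And>s \<omega>. s \<ge> 1 \<Longrightarrow> \<omega> \<in> space M \<Longrightarrow> idx s \<omega> < n"
    and idx_dist: "\<And>s i. s \<ge> 1 \<Longrightarrow> i < n \<Longrightarrow>
                     measure M {\<omega> \<in> space M. idx s \<omega> = i} = 1 / real n"
    and rz_range: "\<And>s \<omega>. s \<ge> 1 \<Longrightarrow> \<omega> \<in> space M \<Longrightarrow> rz s \<omega> \<in> rad_vecs"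
    and rz_dist: "\<And>s r. s \<ge> 1 \<Longrightarrow> r \<in> rad_vecs \<Longrightarrow>
                    measure M {\<omega> \<in> space M. rz s \<omega> = r} = 1 / 2 ^ CARD('d)"
    and rz0_range: "\<And>j \<omega>. j < m \<Longrightarrow> \<omega> \<in> space M \<Longrightarrow> rz0 j \<omega> \<in> rad_vecs"
    and rz0_dist: "\<And>j r. j < m \<Longrightarrow> r \<in> rad_vecs \<Longrightarrow>
                    measure M {\<omega> \<in> space M. rz0 j \<omega> = r} = 1 / 2 ^ CARD('d)"
    and J_range: "\<And>s \<omega>. s \<ge> 1 \<Longrightarrow> \<omega> \<in> space M \<Longrightarrow> J s \<omega> \<subseteq> {..<n} \<and> J s \<omega> \<noteq> {}"
    and J0_range: "\<And>j \<omega>. j < m \<Longrightarrow> \<omega> \<in> space M \<Longrightarrow> J0 j \<omega> \<subseteq> {..<n} \<and> J0 j \<omega> \<noteq> {}"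
    (* the iterates are random variables *)
    and w_meas: "\<And>s. w s \<in> borel_measurable M"
    and z_meas: "\<And>s. z s \<in> borel_measurable M"
    and v_meas: "\<And>s. v s \<in> borel_measurable M"
    and Dh_meas: "\<And>s. Dh s \<in> borel_measurable M"
    (* Scaled L-SVRG *)
    and w_init: "\<And>\<omega>. \<omega> \<in> space M \<Longrightarrow> w 0 \<omega> = w0"
    and z_init: "\<And>\<omega>. \<omega> \<in> space M \<Longrightarrow> z 0 \<omega> = w 0 \<omega>"
    and v_init: "\<And>\<omega>. \<omega> \<in> space M \<Longrightarrow> v 0 \<omega> = gP (w 0 \<omega>)"
    and D_init: "\<And>\<omega>. \<omega> \<in> space M \<Longrightarrow>
       D 0 \<omega> = (1 / real m) *\<^sub>R
         (\<Sum>j<m. diag_mat (hadamard (rz0 j \<omega>) (hessJ H (J0 j \<omega>) (w 0 \<omega>) *v rz0 j \<omega>)))"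
    and D_step: "\<And>s \<omega>. \<omega> \<in> space M \<Longrightarrow>
       D (Suc s) \<omega> = \<beta> *\<^sub>R D s \<omega> + (1 - \<beta>) *\<^sub>R
         diag_mat (hadamard (rz (Suc s) \<omega>) (hessJ H (J (Suc s) \<omega>) (w (Suc s) \<omega>) *v rz (Suc s) \<omega>))"
    and Dh_def: "\<And>s \<omega>. \<omega> \<in> space M \<Longrightarrow>
       Dh s \<omega> = diag_mat (\<chi> i. max \<alpha> \<bar>D s \<omega> $ i $ i\<bar>)"
    and w_step: "\<And>s \<omega>. \<omega> \<in> space M \<Longrightarrow>
       w (Suc s) \<omega> = w s \<omega> - \<eta> *\<^sub>R (matrix_inv (Dh s \<omega>) *v v s \<omega>)"
    and z_step: "\<And>s \<omega>. \<omega> \<in> space M \<Longrightarrow>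
       z (Suc s) \<omega> = (if coin (Suc s) \<omega> then w s \<omega> else z s \<omega>)"
    and v_step: "\<And>s \<omega>. \<omega> \<in> space M \<Longrightarrow>
       v (Suc s) \<omega> = gf (idx (Suc s) \<omega>) (w (Suc s) \<omega>) - gf (idx (Suc s) \<omega>) (z (Suc s) \<omega>)
                      + gP (z (Suc s) \<omega>)"
  shows "(\<integral>\<^sup>+\<omega>. ennreal (wnorm2 (matrix_inv (Dh t \<omega>)) (v t \<omega>)) \<partial>M)
           \<le> 3 * (\<integral>\<^sup>+\<omega>. ennreal (wnorm2 (matrix_inv (Dh t \<omega>)) (gP (w t \<omega>))) \<partial>M)
             + ennreal (6 * L\<^sup>2 / \<alpha>) * (\<integral>\<^sup>+\<omega>. ennreal ((norm (w t \<omega> - z t \<omega>))\<^sup>2) \<partial>M)"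
  proof -
  let ?e = "\<lambda>\<omega>. (\<chi> i. Dh t \<omega> $ i $ i) :: real^'d"
  let ?Q = "\<lambda>e (y::real^'d). (\<Sum>i\<in>UNIV. (1 / e $ i) * (y $ i)\<^sup>2)"
  define G where "G \<omega> = ?Q (?e \<omega>) (gP (w t \<omega>))" for \<omega>
  define N where "N \<omega> = (norm (w t \<omega> - z t \<omega>))\<^sup>2" for \<omega>
  have cont: "continuous_on UNIV gP"
    by (rule has_derivative_continuous_on) (use P_hess has_derivative_at_withinI in blast)
  have gPm: "gP \<in> borel_measurable borel" by (rule borel_measurable_continuous_onI[OF cont])
  have gPw: "(\<lambda>\<omega>. gP (w t \<omega>)) \<in> borel_measurable M"
    by (rule measurable_compose[OF w_meas gPm])
  have Gm: "G \<in> borel_measurable M"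
  proof -
    have d: "(\<lambda>\<omega>. Dh t \<omega> $ i $ i) \<in> borel_measurable M" for i
      by (rule vec_nth_meas[OF vec_nth_meas[OF Dh_meas]])
    have g: "(\<lambda>\<omega>. gP (w t \<omega>) $ i) \<in> borel_measurable M" for i
      by (rule vec_nth_meas[OF gPw])
    show ?thesis unfolding G_def vec_lambda_beta
      by (rule borel_measurable_sum, rule borel_measurable_times, rule borel_measurable_divide,
          rule borel_measurable_const, rule d, rule borel_measurable_power, rule g)
  qed
  have Nm: "N \<in> borel_measurable M" unfolding N_def using w_meas z_meas by measurable
  have c0: "6 * L\<^sup>2 / \<alpha> \<ge> 0" using alpha_pos by simp
  have facts: "wnorm2 (matrix_inv (Dh t \<omega>)) (gP (w t \<omega>)) = G \<omega>
     \<and> wnorm2 (matrix_inv (Dh t \<omega>)) (v t \<omega>) \<le> 3 * G \<omega> + 6 * L\<^sup>2 / \<alpha> * N \<omega> \<and> G \<omega> \<ge> 0"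
    if om: "\<omega> \<in> space M" for \<omega>
  proof -
    have ee: "?e \<omega> $ i = max \<alpha> \<bar>D t \<omega> $ i $ i\<bar>" for i
      using Dh_def[OF om] by (simp add: diag_mat_def)
    have Dhe: "Dh t \<omega> = diag_mat (?e \<omega>)"
      using Dh_def[OF om] by (simp add: diag_mat_def vec_eq_iff)
    have ge: "?e \<omega> $ i \<ge> \<alpha>" for i using ee by simp
    have pos: "?e \<omega> $ i > 0" for i using ge[of i] alpha_pos by linarith
    have inv: "matrix_inv (Dh t \<omega>) = diag_mat (\<chi> i. 1 / ?e \<omega> $ i)"
    proof -
      have nz: "?e \<omega> $ i \<noteq> 0" for i using pos[of i] by linarith
      have "matrix_inv (Dh t \<omega>) = matrix_inv (diag_mat (?e \<omega>))" by (rule arg_cong[OF Dhe])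
      also have "\<dots> = diag_mat (\<chi> i. 1 / ?e \<omega> $ i)" by (rule diag_inv[OF nz])
      finally show ?thesis .
    qed
    have W: "wnorm2 (matrix_inv (Dh t \<omega>)) y = ?Q (?e \<omega>) y" for y
      unfolding inv wnorm2_diag by simp
    have Qnn: "?Q (?e \<omega>) y \<ge> 0" for y using pos by (intro sum_nonneg) (simp add: less_imp_le)
    have Nnn: "N \<omega> \<ge> 0" unfolding N_def by simp
    have Lb: "?Q (?e \<omega>) y \<le> L\<^sup>2 / \<alpha> * N \<omega>" if "norm y \<le> L * norm (w t \<omega> - z t \<omega>)" for y
    proof -
      have "?Q (?e \<omega>) y \<le> (norm y)\<^sup>2 / \<alpha>" by (rule Qnorm[OF alpha_pos ge])
      also have "(norm y)\<^sup>2 \<le> (L * norm (w t \<omega> - z t \<omega>))\<^sup>2"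
        using that by (intro power_mono) auto
      then have "(norm y)\<^sup>2 / \<alpha> \<le> (L * norm (w t \<omega> - z t \<omega>))\<^sup>2 / \<alpha>"
        using alpha_pos by (simp add: divide_right_mono)
      also have "\<dots> = L\<^sup>2 / \<alpha> * N \<omega>" unfolding N_def by (simp add: power_mult_distrib)
      finally show ?thesis .
    qed
    have "wnorm2 (matrix_inv (Dh t \<omega>)) (v t \<omega>) \<le> 3 * G \<omega> + 6 * L\<^sup>2 / \<alpha> * N \<omega>"
    proof (cases t)
      case 0
      then have vv: "v t \<omega> = gP (w t \<omega>)" using v_init[OF om] by simp
      have "6 * L\<^sup>2 / \<alpha> * N \<omega> \<ge> 0" using c0 Nnn by (rule mult_nonneg_nonneg)
      then show ?thesis unfolding W G_def vv using Qnn[of "gP (w t \<omega>)"] by linarith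
    next
      case (Suc s)
      define i where "i = idx (Suc s) \<omega>"
      have il: "i < n" unfolding i_def using idx_range[OF _ om] by simp
      let ?a = "gP (w t \<omega>)" and ?b = "gf i (w t \<omega>) - gf i (z t \<omega>)"
        and ?c = "gP (z t \<omega>) - gP (w t \<omega>)"
      have vv: "v t \<omega> = ?a + ?b + ?c" using v_step[OF om, of s] Suc by (simp add: i_def)
      have "?Q (?e \<omega>) (v t \<omega>) \<le> 3 * ?Q (?e \<omega>) ?a + 3 * ?Q (?e \<omega>) ?b + 3 * ?Q (?e \<omega>) ?c"
        unfolding vv by (rule Q3[OF pos])
      moreover have "?Q (?e \<omega>) ?b \<le> L\<^sup>2 / \<alpha> * N \<omega>" by (rule Lb) (rule f_lip[OF il])
      moreover have "?Q (?e \<omega>) ?c \<le> L\<^sup>2 / \<alpha> * N \<omega>"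
        by (rule Lb) (metis P_lip norm_minus_commute)
      ultimately show ?thesis unfolding W G_def by simp
    qed
    moreover have "wnorm2 (matrix_inv (Dh t \<omega>)) (gP (w t \<omega>)) = G \<omega>" unfolding G_def by (rule W)
    moreover have "G \<omega> \<ge> 0" unfolding G_def by (rule Qnn)
    ultimately show ?thesis by blast
  qed
  have "(\<integral>\<^sup>+\<omega>. ennreal (wnorm2 (matrix_inv (Dh t \<omega>)) (v t \<omega>)) \<partial>M)
      \<le> (\<integral>\<^sup>+\<omega>. 3 * ennreal (G \<omega>) + ennreal (6 * L\<^sup>2 / \<alpha>) * ennreal (N \<omega>) \<partial>M)"
  proof (rule nn_integral_mono)
    fix \<omega> assume om: "\<omega> \<in> space M"
    have Gn: "G \<omega> \<ge> 0" using facts[OF om] by blast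
    have Nn: "N \<omega> \<ge> 0" unfolding N_def by simp
    have "ennreal (wnorm2 (matrix_inv (Dh t \<omega>)) (v t \<omega>)) \<le> ennreal (3 * G \<omega> + 6 * L\<^sup>2 / \<alpha> * N \<omega>)"
      using facts[OF om] by (intro ennreal_leI) blast
    also have "\<dots> = 3 * ennreal (G \<omega>) + ennreal (6 * L\<^sup>2 / \<alpha>) * ennreal (N \<omega>)"
    proof -
      have "ennreal (3 * G \<omega> + 6 * L\<^sup>2 / \<alpha> * N \<omega>) = ennreal (3 * G \<omega>) + ennreal (6 * L\<^sup>2 / \<alpha> * N \<omega>)"
        using Gn mult_nonneg_nonneg[OF c0 Nn] by (intro ennreal_plus) simp_all
      also have "ennreal (3 * G \<omega>) = ennreal 3 * ennreal (G \<omega>)" using Gn by (intro ennreal_mult) simp_all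
      also have "ennreal (6 * L\<^sup>2 / \<alpha> * N \<omega>) = ennreal (6 * L\<^sup>2 / \<alpha>) * ennreal (N \<omega>)"
        using Nn c0 by (intro ennreal_mult) simp_all
      finally show ?thesis by simp
    qed
    finally show "ennreal (wnorm2 (matrix_inv (Dh t \<omega>)) (v t \<omega>)) \<le> 3 * ennreal (G \<omega>) + ennreal (6 * L\<^sup>2 / \<alpha>) * ennreal (N \<omega>)" .
  qed
  also have "\<dots> = 3 * (\<integral>\<^sup>+\<omega>. ennreal (G \<omega>) \<partial>M) + ennreal (6 * L\<^sup>2 / \<alpha>) * (\<integral>\<^sup>+\<omega>. ennreal (N \<omega>) \<partial>M)"
    using Gm Nm by (simp add: nn_integral_add nn_integral_cmult)
  also have "(\<integral>\<^sup>+\<omega>. ennreal (G \<omega>) \<partial>M) = (\<integral>\<^sup>+\<omega>. ennreal (wnorm2 (matrix_inv (Dh t \<omega>)) (gP (w t \<omega>))) \<partial>M)"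
    by (rule nn_integral_cong) (use facts in \<open>metis (no_types, lifting)\<close>)
  finally show ?thesis unfolding N_def .
qed

end
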